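(* The following two statements are equivalent. (P) For any $a\in(0,1)$ and $x\in(\frac12,1]$ there exists $\boldsymbol{\mu}\in\Lambda$ with (i) $\mu_1>\mu_2$, $\mu_1+\mu_2\ge1$, (ii) $\lambda(x,\boldsymbol{\mu})=a$, (iii) $x^\star(\boldsymbol{\mu})<\tilde x$, where $\tilde x=(\frac12+x)/2$. (D) For any $\alpha\in\mathbb{R}$ and $x\in(\frac12,1]$ there exists $\boldsymbol{\xi}=(\xi_1,\xi_2)\in\bar\Lambda$ with $(\bar{\mathrm{i}})$ $\xi_1>\xi_2$ and $\xi_1\ge-\xi_2$, $(\bar{\mathrm{ii}})$ $(1-x)\xi_1+x\xi_2=\alpha$, and $(\bar{\mathrm{iii}})$ $\bar d(\xi_1,(1-\tilde x)\xi_1+\tilde x\xi_2)>\bar d(\xi_2,(1-\tilde x)\xi_1+\tilde x\xi_2)$, where $\tilde x=(\frac12+x)/2$.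
   Context: $\Lambda=\{\boldsymbol{\mu}\in(0,1)^2:\mu_1\neq\mu_2\}$. $d(p,q)$ is the Bernoulli Kullback–Leibler divergence. $g(x,\boldsymbol{\mu})=\inf_{\lambda\in(0,1)}[(1-x)d(\lambda,\mu_1)+x\,d(\lambda,\mu_2)]$, $\lambda(x,\boldsymbol{\mu})$ is the minimizing $\lambda$, and $x^\star(\boldsymbol{\mu})=\arg\max_{x\in(0,1)}g(x,\boldsymbol{\mu})$. Let $\phi(\xi)=\log(1+e^\xi)$, so $\phi'(\xi)=\frac{e^\xi}{1+e^\xi}$ is a bijection $\mathbb{R}\to(0,1)$ with inverse $\phi'^{-1}(u)=\log\frac{u}{1-u}$; the natural parameter of $\boldsymbol{\mu}$ is $\boldsymbol{\xi}=(\phi'^{-1}(\mu_1),\phi'^{-1}(\mu_2))$, and $\bar\Lambda=\{\boldsymbol{\xi}\in\mathbb{R}^2:\xi_1\neq\xi_2\}$. The Bregman divergence is $\bar d(\alpha,\beta)=\phi(\alpha)-\phi(\beta)-(\alpha-\beta)\phi'(\beta)$, so that $d(\mu_1,\mu_2)=\bar d(\xi_2,\xi_1)$. *)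

theory Defs
  imports Complex_Main
begin

definition kl :: "real \<Rightarrow> real \<Rightarrow> real" where
  "kl p q = p * ln (p / q) + (1 - p) * ln ((1 - p) / (1 - q))"

definition Lambda :: "(real \<times> real) set" where
  "Lambda = {mu. fst mu \<in> {0<..<1} \<and> snd mu \<in> {0<..<1} \<and> fst mu \<noteq> snd mu}"

definition gobj :: "real \<Rightarrow> real \<times> real \<Rightarrow> real \<Rightarrow> real" where
  "gobj x mu l = (1 - x) * kl l (fst mu) + x * kl l (snd mu)"

definition gfun :: "real \<Rightarrow> real \<times> real \<Rightarrow> real" where
  "gfun x mu = (INF l\<in>{0<..<1}. gobj x mu l)"

definition lam :: "real \<Rightarrow> real \<times> real \<Rightarrow> real" where
  "lam x mu = (THE l. l \<in> {0<..<1} \<and> (\<forall>l'\<in>{0<..<1}. gobj x mu l \<le> gobj x mu l'))"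

definition xstar :: "real \<times> real \<Rightarrow> real" where
  "xstar mu = (THE x. x \<in> {0<..<1} \<and> (\<forall>y\<in>{0<..<1}. gfun y mu \<le> gfun x mu))"

definition phi :: "real \<Rightarrow> real" where
  "phi \<xi> = ln (1 + exp \<xi>)"

definition phi' :: "real \<Rightarrow> real" where
  "phi' \<xi> = exp \<xi> / (1 + exp \<xi>)"

definition dbar :: "real \<Rightarrow> real \<Rightarrow> real" where
  "dbar a b = phi a - phi b - (a - b) * phi' b"

definition Lambda_bar :: "(real \<times> real) set" where
  "Lambda_bar = {\<xi>. fst \<xi> \<noteq> snd \<xi>}"

end

theory Submission imports Defs begin

definition lg :: "real \<Rightarrow> real" where "lg u = ln (u / (1 - u))"

lemma onep_pos[simp]: "0 < 1 + exp (t::real)" "1 + exp (t::real) \<noteq> 0"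
  using exp_gt_zero[of t] by linarith+

lemma phi'_alt: "phi' t = 1 / (1 + exp (- t))"
  unfolding phi'_def by (simp add: exp_minus field_simps add_pos_pos)

lemma phi'_bounds: "0 < phi' t" "phi' t < 1"
  unfolding phi'_def by (auto simp: add_pos_pos)

lemma phi'_less_iff: "phi' a < phi' b \<longleftrightarrow> a < b"
proof -
  have "phi' a < phi' b \<longleftrightarrow> 1 + exp (- b) < 1 + exp (- a)"
    unfolding phi'_alt by (intro iffI) (auto simp: add_pos_pos divide_simps)
  also have "\<dots> \<longleftrightarrow> a < b" by simp
  finally show ?thesis .
qed

lemma phi'_le_iff: "phi' a \<le> phi' b \<longleftrightarrow> a \<le> b"
  using phi'_less_iff[of b a] by linarith

lemma phi'_eq_iff: "phi' a = phi' b \<longleftrightarrow> a = b"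
  using phi'_less_iff[of a b] phi'_less_iff[of b a] by (metis order_less_irrefl not_less_iff_gr_or_eq)

lemma one_minus_phi': "1 - phi' t = phi' (- t)"
proof -
  have "1 - phi' t = 1 / (1 + exp t)" unfolding phi'_def by (simp add: field_simps)
  also have "\<dots> = phi' (- t)" unfolding phi'_alt by simp
  finally show ?thesis .
qed

lemma phi'_lg: "u \<in> {0<..<1} \<Longrightarrow> phi' (lg u) = u"
  unfolding phi'_def lg_def by (auto simp: field_simps)

lemma lg_phi': "lg (phi' t) = t"
proof -
  have "phi' t / (1 - phi' t) = exp t"
  proof -
    have "1 - phi' t = 1 / (1 + exp t)" unfolding phi'_def by (simp add: field_simps)
    then show ?thesis unfolding phi'_def by simp
  qed
  then show ?thesis unfolding lg_def by simp
qed

lemma ln_phi': "ln (phi' t) = t - phi t"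
  unfolding phi'_def phi_def by (simp add: ln_div add_pos_pos)

lemma ln_one_minus_phi': "ln (1 - phi' t) = - phi t"
proof -
  have "1 - phi' t = 1 / (1 + exp t)" unfolding phi'_def by (simp add: field_simps add_pos_pos)
  then show ?thesis unfolding phi_def by (simp add: ln_div add_pos_pos)
qed

lemma kl_dbar: "kl (phi' e) (phi' s) = dbar s e"
  unfolding kl_def dbar_def
  using phi'_bounds[of e] phi'_bounds[of s]
  by (simp add: ln_div ln_phi' ln_one_minus_phi' algebra_simps)

lemma phi_deriv: "(phi has_real_derivative phi' t) (at t)"
  unfolding phi_def phi'_def
  by (auto intro!: derivative_eq_intros simp: add_pos_pos)

lemma phi'_cont: "isCont phi' t"
  unfolding phi'_def by (auto intro!: continuous_intros simp: add_pos_pos)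

lemma dbar_pos: assumes "a \<noteq> b" shows "dbar a b > 0"
proof (cases "a < b")
  case True
  then obtain z where z: "a < z" "z < b" "phi b - phi a = (b - a) * phi' z"
    using MVT2[of a b phi phi'] phi_deriv by blast
  have "phi' z < phi' b" using z phi'_less_iff by auto
  then have "(b - a) * phi' z < (b - a) * phi' b" using True by simp
  then show ?thesis unfolding dbar_def using z by (simp add: algebra_simps)
next
  case False
  then have ba: "b < a" using assms by simp
  then obtain z where z: "b < z" "z < a" "phi a - phi b = (a - b) * phi' z"
    using MVT2[of b a phi phi'] phi_deriv by blast
  have "phi' b < phi' z" using z phi'_less_iff by auto
  then have "(a - b) * phi' b < (a - b) * phi' z" using ba by simp
  then show ?thesis unfolding dbar_def using z by (simp add: algebra_simps)
qed

lemma dbar_self: "dbar a a = 0" unfolding dbar_def by simp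

definition cc :: "real \<Rightarrow> real \<Rightarrow> real \<Rightarrow> real" where
  "cc s1 s2 y = (1 - y) * s1 + y * s2"
definition Jf :: "real \<Rightarrow> real \<Rightarrow> real \<Rightarrow> real" where
  "Jf s1 s2 y = (1 - y) * phi s1 + y * phi s2 - phi (cc s1 s2 y)"
definition Jd :: "real \<Rightarrow> real \<Rightarrow> real \<Rightarrow> real" where
  "Jd s1 s2 y = phi s2 - phi s1 - (s2 - s1) * phi' (cc s1 s2 y)"

lemma gobj_eq:
  assumes "l \<in> {0<..<1}"
  shows "gobj x (phi' s1, phi' s2) l = Jf s1 s2 x + dbar (cc s1 s2 x) (lg l)"
proof -
  have l: "l = phi' (lg l)" using phi'_lg[OF assms] by simp
  have "gobj x (phi' s1, phi' s2) l = (1 - x) * dbar s1 (lg l) + x * dbar s2 (lg l)"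
    unfolding gobj_def by (subst (1 2) l) (simp add: kl_dbar)
  also have "\<dots> = Jf s1 s2 x + dbar (cc s1 s2 x) (lg l)"
    unfolding Jf_def dbar_def cc_def by (simp add: algebra_simps)
  finally show ?thesis .
qed

lemma gobj_min:
  assumes "l \<in> {0<..<1}"
  shows "gobj x (phi' s1, phi' s2) l \<ge> Jf s1 s2 x"
    "gobj x (phi' s1, phi' s2) l = Jf s1 s2 x \<longleftrightarrow> l = phi' (cc s1 s2 x)"
proof -
  show "gobj x (phi' s1, phi' s2) l \<ge> Jf s1 s2 x"
    using gobj_eq[OF assms, of x s1 s2] dbar_pos[of "cc s1 s2 x" "lg l"]
    by (cases "cc s1 s2 x = lg l") (auto simp: dbar_self)
  have "l = phi' (cc s1 s2 x) \<longleftrightarrow> lg l = cc s1 s2 x"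
    using phi'_lg[OF assms] lg_phi' by metis
  then show "gobj x (phi' s1, phi' s2) l = Jf s1 s2 x \<longleftrightarrow> l = phi' (cc s1 s2 x)"
    using gobj_eq[OF assms, of x s1 s2] dbar_pos[of "cc s1 s2 x" "lg l"]
    by (cases "cc s1 s2 x = lg l") (auto simp: dbar_self)
qed

lemma phi'_in: "phi' t \<in> {0<..<1}" using phi'_bounds[of t] by auto

lemma lam_eq: "lam x (phi' s1, phi' s2) = phi' (cc s1 s2 x)"
  unfolding lam_def
proof (rule the_equality)
  show "phi' (cc s1 s2 x) \<in> {0<..<1} \<and> (\<forall>l'\<in>{0<..<1}. gobj x (phi' s1, phi' s2) (phi' (cc s1 s2 x)) \<le> gobj x (phi' s1, phi' s2) l')"
    using gobj_min[OF phi'_in, of x s1 s2 "cc s1 s2 x"] gobj_min(1) phi'_in by auto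
next
  fix l assume l: "l \<in> {0<..<1} \<and> (\<forall>l'\<in>{0<..<1}. gobj x (phi' s1, phi' s2) l \<le> gobj x (phi' s1, phi' s2) l')"
  then have "gobj x (phi' s1, phi' s2) l \<le> Jf s1 s2 x"
    using gobj_min[OF phi'_in, of x s1 s2 "cc s1 s2 x"] phi'_in by metis
  moreover have "l \<in> {0<..<1}" using l by blast
  ultimately show "l = phi' (cc s1 s2 x)" using gobj_min(1)[of l s1 s2 x] gobj_min(2)[of l x s1 s2] by linarith
qed

lemma gfun_eq: "gfun y (phi' s1, phi' s2) = Jf s1 s2 y"
  unfolding gfun_def
  apply (rule cInf_eq_minimum)
  using gobj_min[OF phi'_in, of y s1 s2 "cc s1 s2 y"] phi'_in apply (metis image_eqI)
  using gobj_min(1) by auto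

lemma Jf_deriv: "(Jf s1 s2 has_real_derivative Jd s1 s2 y) (at y)"
proof -
  have "((\<lambda>y. phi (cc s1 s2 y)) has_real_derivative phi' (cc s1 s2 y) * (s2 - s1)) (at y)"
    unfolding cc_def
    by (rule DERIV_chain2[OF phi_deriv]) (auto intro!: derivative_eq_intros)
  then show ?thesis unfolding Jf_def[abs_def] Jd_def
    by (auto intro!: derivative_eq_intros simp: algebra_simps)
qed

lemma Jd_mono:
  assumes "s1 \<noteq> s2" "y1 < y2"
  shows "Jd s1 s2 y2 < Jd s1 s2 y1"
proof (cases "s1 < s2")
  case True
  have dd: "cc s1 s2 y2 - cc s1 s2 y1 = (y2 - y1) * (s2 - s1)" unfolding cc_def by (simp add: algebra_simps)
  have "0 < (y2 - y1) * (s2 - s1)" using True assms by simp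
  then have "cc s1 s2 y1 < cc s1 s2 y2" using dd by linarith
  then have "phi' (cc s1 s2 y1) < phi' (cc s1 s2 y2)" using phi'_less_iff by blast
  then show ?thesis unfolding Jd_def using True by simp
next
  case False
  then have F: "s2 < s1" using assms by simp
  have dd: "cc s1 s2 y2 - cc s1 s2 y1 = (y2 - y1) * (s2 - s1)" unfolding cc_def by (simp add: algebra_simps)
  have "(y2 - y1) * (s2 - s1) < 0" using F assms by (simp add: mult_pos_neg)
  then have "cc s1 s2 y2 < cc s1 s2 y1" using dd by linarith
  then have "phi' (cc s1 s2 y2) < phi' (cc s1 s2 y1)" using phi'_less_iff by blast
  then show ?thesis unfolding Jd_def using F by (simp add: mult_less_cancel_left_neg)
qed

lemma Jd_cont: "isCont (Jd s1 s2) y"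
  unfolding Jd_def[abs_def] cc_def phi'_def
  by (auto intro!: continuous_intros)

lemma Jf_strict_max:
  assumes "s1 \<noteq> s2" "Jd s1 s2 x0 = 0" "y \<noteq> x0"
  shows "Jf s1 s2 y < Jf s1 s2 x0"
proof (cases "y < x0")
  case True
  then obtain z where z: "y < z" "z < x0" "Jf s1 s2 x0 - Jf s1 s2 y = (x0 - y) * Jd s1 s2 z"
    using MVT2[of y x0 "Jf s1 s2" "Jd s1 s2"] Jf_deriv by blast
  have "Jd s1 s2 z > 0" using Jd_mono[OF assms(1) z(2)] assms(2) by simp
  then have "(x0 - y) * Jd s1 s2 z > 0" using True by simp
  then show ?thesis using z by simp
next
  case False
  then have yx: "x0 < y" using assms by simp
  then obtain z where z: "x0 < z" "z < y" "Jf s1 s2 y - Jf s1 s2 x0 = (y - x0) * Jd s1 s2 z"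
    using MVT2[of x0 y "Jf s1 s2" "Jd s1 s2"] Jf_deriv by blast
  have "Jd s1 s2 z < 0" using Jd_mono[OF assms(1) z(1)] assms(2) by simp
  then have "(y - x0) * Jd s1 s2 z < 0" using yx by (simp add: mult_pos_neg)
  then show ?thesis using z by simp
qed

lemma xstar_char:
  assumes "s1 \<noteq> s2"
  obtains x0 where "x0 \<in> {0<..<1}" "Jd s1 s2 x0 = 0" "xstar (phi' s1, phi' s2) = x0"
proof -
  have J0: "Jd s1 s2 0 = dbar s2 s1" unfolding Jd_def cc_def dbar_def by simp
  have J1: "Jd s1 s2 1 = - dbar s1 s2" unfolding Jd_def cc_def dbar_def by (simp add: algebra_simps)
  have p0: "Jd s1 s2 0 > 0" using J0 dbar_pos assms by auto
  have p1: "Jd s1 s2 1 < 0" using J1 dbar_pos assms by auto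
  obtain x0 where x0: "0 \<le> x0" "x0 \<le> 1" "Jd s1 s2 x0 = 0"
    using IVT2[of "Jd s1 s2" 1 0 0] p0 p1 Jd_cont by force
  have x0i: "x0 \<in> {0<..<1}" using x0 p0 p1
    by (cases "x0 = 0"; cases "x0 = 1") auto
  have "xstar (phi' s1, phi' s2) = x0"
    unfolding xstar_def
  proof (rule the_equality)
    show "x0 \<in> {0<..<1} \<and> (\<forall>y\<in>{0<..<1}. gfun y (phi' s1, phi' s2) \<le> gfun x0 (phi' s1, phi' s2))"
      using x0i Jf_strict_max[OF assms x0(3)] by (auto simp: gfun_eq less_imp_le)
         (metis order.refl less_imp_le)
  next
    fix x assume "x \<in> {0<..<1} \<and> (\<forall>y\<in>{0<..<1}. gfun y (phi' s1, phi' s2) \<le> gfun x (phi' s1, phi' s2))"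
    then have "Jf s1 s2 x0 \<le> Jf s1 s2 x" using x0i by (auto simp: gfun_eq)
    then show "x = x0" using Jf_strict_max[OF assms x0(3), of x] by force
  qed
  then show ?thesis using that x0i x0 by blast
qed

lemma xstar_less_iff:
  assumes "s1 \<noteq> s2"
  shows "xstar (phi' s1, phi' s2) < t \<longleftrightarrow> dbar s1 (cc s1 s2 t) > dbar s2 (cc s1 s2 t)"
proof -
  obtain x0 where x0: "x0 \<in> {0<..<1}" "Jd s1 s2 x0 = 0" "xstar (phi' s1, phi' s2) = x0"
    using xstar_char[OF assms] by blast
  have e: "Jd s1 s2 t = dbar s2 (cc s1 s2 t) - dbar s1 (cc s1 s2 t)"
    unfolding Jd_def dbar_def by (simp add: algebra_simps)
  have "x0 < t \<longleftrightarrow> Jd s1 s2 t < 0"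
  proof
    assume "x0 < t" then show "Jd s1 s2 t < 0" using Jd_mono[OF assms] x0(2) by force
  next
    assume h: "Jd s1 s2 t < 0"
    show "x0 < t"
    proof (rule ccontr)
      assume "\<not> x0 < t"
      then have "t = x0 \<or> t < x0" by auto
      then show False using Jd_mono[OF assms, of t x0] x0(2) h by auto
    qed
  qed
  then show ?thesis using x0(3) e by simp
qed

theorem mainTheorem3:
  shows "(\<forall>a\<in>{0<..<(1::real)}. \<forall>x\<in>{1/2<..(1::real)}.
            \<exists>mu\<in>Lambda. fst mu > snd mu \<and> fst mu + snd mu \<ge> 1 \<and>
               lam x mu = a \<and> xstar mu < (1/2 + x) / 2)
         \<longleftrightarrow>
         (\<forall>\<alpha>::real. \<forall>x\<in>{1/2<..(1::real)}.
            \<exists>\<xi>\<in>Lambda_bar. fst \<xi> > snd \<xi> \<and> fst \<xi> \<ge> - snd \<xi> \<and>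
               (1 - x) * fst \<xi> + x * snd \<xi> = \<alpha> \<and>
               dbar (fst \<xi>) ((1 - (1/2 + x) / 2) * fst \<xi> + ((1/2 + x) / 2) * snd \<xi>)
                 > dbar (snd \<xi>) ((1 - (1/2 + x) / 2) * fst \<xi> + ((1/2 + x) / 2) * snd \<xi>))"
  (is "?P \<longleftrightarrow> ?D")
proof
  assume P: ?P
  show ?D
  proof (intro allI ballI)
    fix \<alpha> :: real and x :: real
    assume x: "x \<in> {1/2<..1}"
    obtain mu where mu: "mu \<in> Lambda" "fst mu > snd mu" "fst mu + snd mu \<ge> 1"
      "lam x mu = phi' \<alpha>" "xstar mu < (1/2 + x) / 2"
      using P phi'_in[of \<alpha>] x by blast
    define s1 where "s1 = lg (fst mu)"
    define s2 where "s2 = lg (snd mu)"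
    have m1: "fst mu = phi' s1" unfolding s1_def using mu(1) phi'_lg by (auto simp: Lambda_def)
    have m2: "snd mu = phi' s2" unfolding s2_def using mu(1) phi'_lg by (auto simp: Lambda_def)
    have mueq: "mu = (phi' s1, phi' s2)" using m1 m2 by (metis prod.collapse)
    have gt: "s1 > s2" using mu(2) m1 m2 phi'_less_iff by simp
    then have ne: "s1 \<noteq> s2" by simp
    have "phi' (- s2) \<le> phi' s1" using mu(3) m1 m2 one_minus_phi'[of s2] by linarith
    then have ge: "s1 \<ge> - s2" using phi'_le_iff by blast
    have "phi' (cc s1 s2 x) = phi' \<alpha>" using mu(4) lam_eq mueq by simp
    then have ce: "cc s1 s2 x = \<alpha>" using phi'_eq_iff by blast
    have "dbar s1 (cc s1 s2 ((1/2 + x) / 2)) > dbar s2 (cc s1 s2 ((1/2 + x) / 2))"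
      using xstar_less_iff[OF ne, of "(1/2 + x) / 2"] mu(5) mueq by simp
    then show "\<exists>\<xi>\<in>Lambda_bar. fst \<xi> > snd \<xi> \<and> fst \<xi> \<ge> - snd \<xi> \<and>
               (1 - x) * fst \<xi> + x * snd \<xi> = \<alpha> \<and>
               dbar (fst \<xi>) ((1 - (1/2 + x) / 2) * fst \<xi> + ((1/2 + x) / 2) * snd \<xi>)
                 > dbar (snd \<xi>) ((1 - (1/2 + x) / 2) * fst \<xi> + ((1/2 + x) / 2) * snd \<xi>)"
      using gt ge ce ne unfolding cc_def Lambda_bar_def
      by (intro bexI[of _ "(s1, s2)"]) auto
  qed
next
  assume D: ?D
  show ?P
  proof (intro ballI)
    fix a x :: real
    assume a: "a \<in> {0<..<1}" and x: "x \<in> {1/2<..1}"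
    obtain xi where xi: "xi \<in> Lambda_bar" "fst xi > snd xi" "fst xi \<ge> - snd xi"
      "(1 - x) * fst xi + x * snd xi = lg a"
      "dbar (fst xi) ((1 - (1/2 + x) / 2) * fst xi + ((1/2 + x) / 2) * snd xi)
                 > dbar (snd xi) ((1 - (1/2 + x) / 2) * fst xi + ((1/2 + x) / 2) * snd xi)"
      using D x by blast
    define s1 where "s1 = fst xi"
    define s2 where "s2 = snd xi"
    have gt: "s1 > s2" using xi(2) s1_def s2_def by simp
    then have ne: "s1 \<noteq> s2" by simp
    have inL: "(phi' s1, phi' s2) \<in> Lambda" using phi'_in ne phi'_eq_iff by (auto simp: Lambda_def)
    have g1: "phi' s1 > phi' s2" using gt phi'_less_iff by blast
    have "phi' (- s2) \<le> phi' s1" using xi(3) phi'_le_iff s1_def s2_def by simp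
    then have g2: "phi' s1 + phi' s2 \<ge> 1" using one_minus_phi'[of s2] by linarith
    have "lam x (phi' s1, phi' s2) = phi' (lg a)" using lam_eq xi(4) s1_def s2_def cc_def by simp
    then have l: "lam x (phi' s1, phi' s2) = a" using phi'_lg[OF a] by simp
    have "xstar (phi' s1, phi' s2) < (1/2 + x) / 2"
      using xstar_less_iff[OF ne, of "(1/2 + x) / 2"] xi(5) unfolding s1_def s2_def cc_def by simp
    then show "\<exists>mu\<in>Lambda. fst mu > snd mu \<and> fst mu + snd mu \<ge> 1 \<and>
               lam x mu = a \<and> xstar mu < (1/2 + x) / 2"
      using inL g1 g2 l by (intro bexI[of _ "(phi' s1, phi' s2)"]) auto
  qed
qed

end
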